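(* If $\Lambda$ is a subgroup of a group $\Gamma$, then $\mathrm{Lit}(\Lambda)\le\mathrm{Lit}(\Gamma)$.
   Context: $T_1(\Gamma)$ is the space of all $f\colon\Gamma\to\mathbf{C}$ for which there exist $f_1,f_2\colon\Gamma\times\Gamma\to\mathbf{C}$ with $f(x^{-1}y)=f_1(x,y)+f_2(x,y)$ for all $x,y$, $\sup_x\sum_y|f_1(x,y)|<\infty$, $\sup_y\sum_x|f_2(x,y)|<\infty$; $\mathrm{Lit}(\Gamma)=\inf\{p>0:T_1(\Gamma)\subseteq\ell^p(\Gamma)\}\in[0,\infty]$. *)

theory Defs
  imports "HOL-Analysis.Analysis" "HOL-Algebra.Group"
begin

definition T1 :: "('a, 'b) monoid_scheme \<Rightarrow> ('a \<Rightarrow> complex) set" where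
  "T1 G = {f. \<exists>f1 f2 :: 'a \<Rightarrow> 'a \<Rightarrow> complex.
      (\<forall>x\<in>carrier G. \<forall>y\<in>carrier G. f (inv\<^bsub>G\<^esub> x \<otimes>\<^bsub>G\<^esub> y) = f1 x y + f2 x y) \<and>
      (SUP x\<in>carrier G. \<Sum>\<^sub>\<infinity> y\<in>carrier G. ennreal (norm (f1 x y))) < \<infinity> \<and>
      (SUP y\<in>carrier G. \<Sum>\<^sub>\<infinity> x\<in>carrier G. ennreal (norm (f2 x y))) < \<infinity>}"

definition lp :: "('a, 'b) monoid_scheme \<Rightarrow> real \<Rightarrow> ('a \<Rightarrow> complex) set" where
  "lp G p = {f. (\<Sum>\<^sub>\<infinity> x\<in>carrier G. ennreal (norm (f x) powr p)) < \<infinity>}"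

definition Lit :: "('a, 'b) monoid_scheme \<Rightarrow> ereal" where
  "Lit G = Inf (ereal ` {p::real. p > 0 \<and> T1 G \<subseteq> lp G p})"

end

theory Submission
  imports Defs
begin

context group
begin

lemma key_sum:
  fixes F :: "'a \<Rightarrow> complex"
  assumes H: "subgroup H G" and a: "a \<in> carrier G"
    and rep: "\<And>y. y\<in>carrier G \<Longrightarrow> rep y \<in> carrier G \<and> inv (rep y) \<otimes> y \<in> H"
    and repeq: "\<And>y. y\<in>carrier G \<Longrightarrow> inv a \<otimes> y \<in> H \<Longrightarrow> rep y = rep a"
  shows "(\<Sum>\<^sub>\<infinity>y\<in>carrier G. ennreal (norm (if inv a \<otimes> y \<in> H then F (inv (rep y) \<otimes> y) else 0)))
         \<le> (\<Sum>\<^sub>\<infinity>z\<in>H. ennreal (norm (F z)))"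
proof -
  define S where "S = {y\<in>carrier G. inv a \<otimes> y \<in> H}"
  define hh where "hh y = inv (rep y) \<otimes> y" for y
  have "(\<Sum>\<^sub>\<infinity>y\<in>carrier G. ennreal (norm (if inv a \<otimes> y \<in> H then F (inv (rep y) \<otimes> y) else 0)))
      = (\<Sum>\<^sub>\<infinity>y\<in>S. ennreal (norm (F (hh y))))"
    by (rule infsum_cong_neutral) (auto simp: S_def hh_def)
  also have inj: "inj_on hh S"
  proof (rule inj_onI)
    fix y y' assume y: "y \<in> S" and y': "y' \<in> S" and e: "hh y = hh y'"
    have "rep y = rep a" "rep y' = rep a" using y y' repeq by (auto simp: S_def)
    then have "inv (rep a) \<otimes> y = inv (rep a) \<otimes> y'" using e by (simp add: hh_def)
    moreover have "inv (rep a) \<in> carrier G" using rep a by auto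
    ultimately show "y = y'" using y y' by (auto simp: S_def)
  qed
  have "(\<Sum>\<^sub>\<infinity>y\<in>S. ennreal (norm (F (hh y)))) = (\<Sum>\<^sub>\<infinity>z\<in>hh ` S. ennreal (norm (F z)))"
    using infsum_reindex[OF inj, of "\<lambda>z. ennreal (norm (F z))"] by (simp add: comp_def)
  also have "\<dots> \<le> (\<Sum>\<^sub>\<infinity>z\<in>H. ennreal (norm (F z)))"
    by (rule infsum_mono_neutral) (auto intro: nonneg_summable_on_complete simp: S_def hh_def rep subgroup.m_closed[OF H])
  finally show ?thesis .
qed

lemma ext_T1:
  assumes H: "subgroup H G" and f: "f \<in> T1 (G\<lparr>carrier := H\<rparr>)"
  shows "(\<lambda>x. if x \<in> H then f x else 0) \<in> T1 G"
proof -
  obtain f1 f2 where eq: "\<And>x y. x\<in>H \<Longrightarrow> y\<in>H \<Longrightarrow> f (inv x \<otimes> y) = f1 x y + f2 x y"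
    and b1: "(SUP x\<in>H. \<Sum>\<^sub>\<infinity> y\<in>H. ennreal (norm (f1 x y))) < \<infinity>"
    and b2: "(SUP y\<in>H. \<Sum>\<^sub>\<infinity> x\<in>H. ennreal (norm (f2 x y))) < \<infinity>"
    using f H unfolding T1_def by auto
  define rep where "rep y = (SOME z. z \<in> carrier G \<and> inv y \<otimes> z \<in> H)" for y
  have rep1: "rep y \<in> carrier G \<and> inv y \<otimes> rep y \<in> H" if y: "y \<in> carrier G" for y
  proof -
    have "y \<in> carrier G \<and> inv y \<otimes> y \<in> H" using y H subgroup.one_closed by fastforce
    then show ?thesis unfolding rep_def by (rule someI)
  qed
  have rep: "rep y \<in> carrier G \<and> inv (rep y) \<otimes> y \<in> H" if y: "y \<in> carrier G" for y
  proof -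
    have "inv (inv y \<otimes> rep y) \<in> H" using rep1[OF y] by (simp add: subgroup.m_inv_closed[OF H])
    moreover have "inv (inv y \<otimes> rep y) = inv (rep y) \<otimes> y" using rep1[OF y] y
      by (simp add: inv_mult_group)
    ultimately show ?thesis using rep1[OF y] by simp
  qed
  have repeq: "rep y = rep a" if "a \<in> carrier G" "y \<in> carrier G" "inv a \<otimes> y \<in> H" for a y
  proof -
    have "(\<lambda>z. z \<in> carrier G \<and> inv y \<otimes> z \<in> H) = (\<lambda>z. z \<in> carrier G \<and> inv a \<otimes> z \<in> H)"
    proof (rule ext, rule iffI)
      fix z assume z: "z \<in> carrier G \<and> inv y \<otimes> z \<in> H"
      have "(inv a \<otimes> y) \<otimes> (inv y \<otimes> z) \<in> H" using z that by (simp add: subgroup.m_closed[OF H])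
      moreover have "(inv a \<otimes> y) \<otimes> (inv y \<otimes> z) = inv a \<otimes> z" using z that
        by (simp add: m_assoc[symmetric]) (simp add: m_assoc)
      ultimately show "z \<in> carrier G \<and> inv a \<otimes> z \<in> H" using z by simp
    next
      fix z assume z: "z \<in> carrier G \<and> inv a \<otimes> z \<in> H"
      have "inv (inv a \<otimes> y) \<in> H" using that by (simp add: subgroup.m_inv_closed[OF H])
      then have "inv (inv a \<otimes> y) \<otimes> (inv a \<otimes> z) \<in> H" using z by (simp add: subgroup.m_closed[OF H])
      moreover have "inv (inv a \<otimes> y) \<otimes> (inv a \<otimes> z) = inv y \<otimes> z" using z that
        by (simp add: inv_mult_group m_assoc[symmetric]) (simp add: m_assoc)
      ultimately show "z \<in> carrier G \<and> inv y \<otimes> z \<in> H" using z by simp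
    qed
    then show ?thesis unfolding rep_def by simp
  qed
  define hh where "hh y = inv (rep y) \<otimes> y" for y
  define g1 where "g1 x y = (if inv x \<otimes> y \<in> H then f1 (hh x) (hh y) else 0)" for x y
  define g2 where "g2 x y = (if inv x \<otimes> y \<in> H then f2 (hh x) (hh y) else 0)" for x y
  have HG: "H \<subseteq> carrier G" using subgroup.subset[OF H] .
  have e: "(\<lambda>x. if x \<in> H then f x else 0) (inv x \<otimes> y) = g1 x y + g2 x y"
    if x: "x \<in> carrier G" and y: "y \<in> carrier G" for x y
  proof (cases "inv x \<otimes> y \<in> H")
    case True
    have r: "rep y = rep x" using repeq[OF x y True] .
    have rc: "rep x \<in> carrier G" using rep x by blast
    have "inv (hh x) \<otimes> hh y = inv x \<otimes> y" using r rc x y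
      by (simp add: hh_def inv_mult_group m_assoc[symmetric]) (simp add: m_assoc)
    moreover have "hh x \<in> H" "hh y \<in> H" using rep x y by (auto simp: hh_def)
    ultimately show ?thesis using True eq[of "hh x" "hh y"] by (simp add: g1_def g2_def)
  next
    case False then show ?thesis by (simp add: g1_def g2_def)
  qed
  have s1: "(SUP x\<in>carrier G. \<Sum>\<^sub>\<infinity> y\<in>carrier G. ennreal (norm (g1 x y)))
      \<le> (SUP x\<in>H. \<Sum>\<^sub>\<infinity> y\<in>H. ennreal (norm (f1 x y)))"
  proof (rule SUP_least)
    fix x assume x: "x \<in> carrier G"
    have "(\<Sum>\<^sub>\<infinity> y\<in>carrier G. ennreal (norm (g1 x y))) \<le> (\<Sum>\<^sub>\<infinity> z\<in>H. ennreal (norm (f1 (hh x) z)))"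
      using key_sum[OF H x, of rep "f1 (inv (rep x) \<otimes> x)"] rep repeq[OF x] unfolding g1_def hh_def by simp
    also have "\<dots> \<le> (SUP x\<in>H. \<Sum>\<^sub>\<infinity> y\<in>H. ennreal (norm (f1 x y)))"
      by (rule SUP_upper) (use rep x in \<open>auto simp: hh_def\<close>)
    finally show "(\<Sum>\<^sub>\<infinity> y\<in>carrier G. ennreal (norm (g1 x y))) \<le> (SUP x\<in>H. \<Sum>\<^sub>\<infinity> y\<in>H. ennreal (norm (f1 x y)))" .
  qed
  have sym: "inv x \<otimes> y \<in> H \<longleftrightarrow> inv y \<otimes> x \<in> H" if "x \<in> carrier G" "y \<in> carrier G" for x y
  proof -
    have "inv (inv x \<otimes> y) = inv y \<otimes> x" "inv (inv y \<otimes> x) = inv x \<otimes> y" using that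
      by (simp_all add: inv_mult_group)
    then show ?thesis using subgroup.m_inv_closed[OF H] by metis
  qed
  have s2: "(SUP y\<in>carrier G. \<Sum>\<^sub>\<infinity> x\<in>carrier G. ennreal (norm (g2 x y)))
      \<le> (SUP y\<in>H. \<Sum>\<^sub>\<infinity> x\<in>H. ennreal (norm (f2 x y)))"
  proof (rule SUP_least)
    fix y assume y: "y \<in> carrier G"
    have "(\<Sum>\<^sub>\<infinity> x\<in>carrier G. ennreal (norm (g2 x y)))
        = (\<Sum>\<^sub>\<infinity> x\<in>carrier G. ennreal (norm (if inv y \<otimes> x \<in> H then (\<lambda>z. f2 z (hh y)) (inv (rep x) \<otimes> x) else 0)))"
      by (rule infsum_cong) (use sym y in \<open>simp add: g2_def hh_def\<close>)
    also have "\<dots> \<le> (\<Sum>\<^sub>\<infinity> z\<in>H. ennreal (norm (f2 z (hh y))))"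
      using key_sum[OF H y, of rep "\<lambda>z. f2 z (hh y)"] rep repeq[OF y] by simp
    also have "\<dots> \<le> (SUP y\<in>H. \<Sum>\<^sub>\<infinity> x\<in>H. ennreal (norm (f2 x y)))"
      by (rule SUP_upper) (use rep y in \<open>auto simp: hh_def\<close>)
    finally show "(\<Sum>\<^sub>\<infinity> x\<in>carrier G. ennreal (norm (g2 x y))) \<le> (SUP y\<in>H. \<Sum>\<^sub>\<infinity> x\<in>H. ennreal (norm (f2 x y)))" .
  qed
  show ?thesis unfolding T1_def
    using e le_less_trans[OF s1 b1] le_less_trans[OF s2 b2] by blast
qed

lemma T1_lp_sub:
  assumes H: "subgroup H G" and p: "T1 G \<subseteq> lp G p"
  shows "T1 (G\<lparr>carrier := H\<rparr>) \<subseteq> lp (G\<lparr>carrier := H\<rparr>) p"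
proof
  fix f assume f: "f \<in> T1 (G\<lparr>carrier := H\<rparr>)"
  define g where "g x = (if x \<in> H then f x else 0)" for x
  have "g \<in> lp G p" using ext_T1[OF H f] p unfolding g_def by blast
  then have lt: "(\<Sum>\<^sub>\<infinity>x\<in>carrier G. ennreal (norm (g x) powr p)) < \<infinity>" by (simp add: lp_def)
  have HG: "H \<subseteq> carrier G" using subgroup.subset[OF H] .
  have "(\<Sum>\<^sub>\<infinity>x\<in>H. ennreal (norm (f x) powr p)) = (\<Sum>\<^sub>\<infinity>x\<in>H. ennreal (norm (g x) powr p))"
    by (rule infsum_cong) (simp add: g_def)
  also have "\<dots> \<le> (\<Sum>\<^sub>\<infinity>x\<in>carrier G. ennreal (norm (g x) powr p))"
    by (rule infsum_mono_neutral) (use HG in \<open>auto intro: nonneg_summable_on_complete\<close>)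
  finally show "f \<in> lp (G\<lparr>carrier := H\<rparr>) p" using lt by (simp add: lp_def)
qed

end

theorem proposition3p4:
  fixes G :: "('a, 'b) monoid_scheme" and H :: "'a set"
  assumes "group G" and "subgroup H G"
  shows "Lit (G\<lparr>carrier := H\<rparr>) \<le> Lit G"
  unfolding Lit_def
  by (rule Inf_superset_mono) (use group.T1_lp_sub[OF assms] in blast)

end
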